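(* Let $a>\log M+3$. Suppose that: (a) $X$ is distributed as the uniform mixture of $M$ unit-variance Gaussians on $\mathbb{R}$ with true centers $\mu_1^*,\dots,\mu_M^*$, all lying in $(-\infty,-10a)\cup(a,+\infty)$, with at least one true center in $(a,3a)$; (b) the current centers $\mu_1,\dots,\mu_M\in\mathbb{R}$ are such that for every true center $\mu_j^*\in(-\infty,-10a)$ there exists $j'$ with $|\mu_{j'}-\mu_j^*|\le|\mu_j^*|/6$. Then for every $i\in[M]$ with $\mu_i\in[0,4a]$, we have $\mathbb{E}[w_i(X)X]\ge0$.
   Context: Dimension $d=1$. The uniform mixture with true centers $\mu_1^*,\dots,\mu_M^*$ has density $\frac1M\sum_j\frac{1}{\sqrt{2\pi}}e^{-(x-\mu_j^* )^2/2}$. For current centers $\mu_1,\dots,\mu_M$, the membership weights are $$w_i(x)=\frac{e^{-(x-\mu_i)^2/2}}{\sum_{j=1}^M e^{-(x-\mu_j)^2/2}}.$$ *)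

theory Defs
  imports "HOL-Probability.Probability"
begin

definition weight :: "nat \<Rightarrow> (nat \<Rightarrow> real) \<Rightarrow> nat \<Rightarrow> real \<Rightarrow> real" where
  "weight M mu i x = exp (-(x - mu i)\<^sup>2 / 2) / (\<Sum>j<M. exp (-(x - mu j)\<^sup>2 / 2))"

definition mixture_density :: "nat \<Rightarrow> (nat \<Rightarrow> real) \<Rightarrow> real \<Rightarrow> real" where
  "mixture_density M mustar x = (1 / real M) * (\<Sum>j<M. normal_density (mustar j) 1 x)"

end

theory Submission
  imports Defs
begin

lemma weight_nonneg: "0 \<le> weight M mu i x"
  unfolding weight_def by (auto intro!: divide_nonneg_nonneg sum_nonneg)

lemma weight_sum_pos: assumes "i < (M::nat)" shows "0 < (\<Sum>j<M. exp (-((x::real) - mu j)\<^sup>2 / 2))"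
proof -
  have "{..<M} \<noteq> {}" using assms by auto
  then show ?thesis by (intro sum_pos) auto
qed

lemma weight_pos: "i < M \<Longrightarrow> 0 < weight M mu i x"
  unfolding weight_def using weight_sum_pos[of i M x mu] by auto

lemma weight_le1: "i < M \<Longrightarrow> weight M mu i x \<le> 1"
proof -
  assume "i < M"
  have "exp (-(x - mu i)\<^sup>2 / 2) \<le> (\<Sum>j<M. exp (-(x - mu j)\<^sup>2 / 2))"
    using \<open>i<M\<close> by (intro member_le_sum) auto
  then show ?thesis unfolding weight_def using weight_sum_pos[OF \<open>i<M\<close>, of x mu]
    by (simp add: divide_le_eq)
qed

lemma weight_lower: "i < M \<Longrightarrow> exp (-(x - mu i)\<^sup>2 / 2) / real M \<le> weight M mu i x"
proof -
  assume "i < M"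
  have "(\<Sum>j<M. exp (-(x - mu j)\<^sup>2 / 2)) \<le> (\<Sum>j<M. 1)"
    by (intro sum_mono) auto
  then have "(\<Sum>j<M. exp (-(x - mu j)\<^sup>2 / 2)) \<le> real M" by simp
  then show ?thesis unfolding weight_def using weight_sum_pos[OF \<open>i<M\<close>, of x mu]
    by (intro divide_left_mono) auto
qed

lemma weight_upper: "j < M \<Longrightarrow> weight M mu i x \<le> exp ((x - mu j)\<^sup>2 / 2 - (x - mu i)\<^sup>2 / 2)"
proof -
  assume "j < M"
  have le: "exp (-(x - mu j)\<^sup>2 / 2) \<le> (\<Sum>k<M. exp (-(x - mu k)\<^sup>2 / 2))"
    using \<open>j<M\<close> by (intro member_le_sum) auto
  have "weight M mu i x \<le> exp (-(x - mu i)\<^sup>2 / 2) / exp (-(x - mu j)\<^sup>2 / 2)"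
    unfolding weight_def using weight_sum_pos[OF \<open>j<M\<close>, of x mu] by (intro divide_left_mono le) auto
  also have "\<dots> = exp ((x - mu j)\<^sup>2 / 2 - (x - mu i)\<^sup>2 / 2)"
    by (simp add: exp_diff[symmetric])
  finally show ?thesis .
qed

lemma weight_inv: "i < M \<Longrightarrow> 1 / weight M mu i x = (\<Sum>j<M. exp ((x - mu i)\<^sup>2 / 2 - (x - mu j)\<^sup>2 / 2))"
proof -
  assume "i < M"
  have "1 / weight M mu i x = (\<Sum>j<M. exp (-(x - mu j)\<^sup>2 / 2)) / exp (-(x - mu i)\<^sup>2 / 2)"
    unfolding weight_def by simp
  also have "\<dots> = (\<Sum>j<M. exp (-(x - mu j)\<^sup>2 / 2) / exp (-(x - mu i)\<^sup>2 / 2))"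
    by (simp add: sum_divide_distrib)
  also have "\<dots> = (\<Sum>j<M. exp ((x - mu i)\<^sup>2 / 2 - (x - mu j)\<^sup>2 / 2))"
    by (intro sum.cong refl) (simp add: exp_diff[symmetric])
  finally show ?thesis .
qed

lemma weight_meas[measurable]: "weight M mu i \<in> borel_measurable borel"
  unfolding weight_def[abs_def] by measurable

lemma weight_ratio:
  assumes "i < M" "x \<le> y" "y \<le> mu i + 2"
  shows "weight M mu i x \<le> (1 + real M * exp 2) * weight M mu i y"
proof -
  define E where "E = (\<lambda>z j. (z - mu i)\<^sup>2 / 2 - (z - mu j)\<^sup>2 / 2)"
  have Ef: "E z j = (mu j - mu i) * (z - mu i) - (mu j - mu i)\<^sup>2 / 2" for z j
    unfolding E_def power2_eq_square by (simp add: field_simps)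
  have trm: "exp (E y j) \<le> exp (E x j) + exp 2" for j
  proof (cases "mu j - mu i \<le> 0")
    case True
    then have "E y j \<le> E x j" unfolding Ef using assms(2) by (simp add: mult_left_mono_neg)
    then show ?thesis by (smt (verit) exp_gt_zero exp_le_cancel_iff)
  next
    case False
    then have d: "mu j - mu i > 0" by simp
    have "(mu j - mu i) * (y - mu i) \<le> (mu j - mu i) * 2"
      using assms(3) d by (intro mult_left_mono) auto
    moreover have "(mu j - mu i) * 2 - (mu j - mu i)\<^sup>2 / 2 \<le> 2"
    proof -
      have "(mu j - mu i - 2)\<^sup>2 = (mu j - mu i)\<^sup>2 - 4 * (mu j - mu i) + 4"
        by (simp add: power2_eq_square algebra_simps)
      moreover have "0 \<le> (mu j - mu i - 2)\<^sup>2" by simp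
      ultimately show ?thesis by linarith
    qed
    ultimately have "E y j \<le> 2" unfolding Ef by linarith
    then show ?thesis by (smt (verit) exp_gt_zero exp_le_cancel_iff)
  qed
  have Sx: "1 / weight M mu i x = (\<Sum>j<M. exp (E x j))" unfolding E_def using weight_inv[OF assms(1)] .
  have Sy: "1 / weight M mu i y = (\<Sum>j<M. exp (E y j))" unfolding E_def using weight_inv[OF assms(1)] .
  have "(\<Sum>j<M. exp (E y j)) \<le> (\<Sum>j<M. exp (E x j) + exp 2)"
    by (intro sum_mono trm)
  also have "\<dots> = (\<Sum>j<M. exp (E x j)) + real M * exp 2" by (simp add: sum.distrib)
  finally have le1: "(\<Sum>j<M. exp (E y j)) \<le> (\<Sum>j<M. exp (E x j)) + real M * exp 2" .
  have "exp (E x i) \<le> (\<Sum>j<M. exp (E x j))" using assms(1) by (intro member_le_sum) auto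
  then have ge1: "1 \<le> (\<Sum>j<M. exp (E x j))" unfolding E_def by simp
  have "(\<Sum>j<M. exp (E y j)) \<le> (1 + real M * exp 2) * (\<Sum>j<M. exp (E x j))"
  proof -
    have "real M * exp 2 * 1 \<le> real M * exp 2 * (\<Sum>j<M. exp (E x j))"
      using ge1 by (intro mult_left_mono) auto
    then show ?thesis using le1 by (simp add: algebra_simps)
  qed
  then have "1 / weight M mu i y \<le> (1 + real M * exp 2) * (1 / weight M mu i x)"
    using Sx Sy by simp
  moreover have "0 < weight M mu i x" "0 < weight M mu i y"
    using weight_pos[OF assms(1)] by auto
  ultimately show ?thesis by (simp add: divide_simps mult.commute)
qed

lemma f_int:
  assumes "i < M"
  shows "integrable lborel (\<lambda>x. weight M mu i x * x * normal_density m 1 x)"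
proof -
  have int0: "integrable lborel (\<lambda>x. normal_density m 1 x * x)"
    using integrable_normal_moment_nz_1[of 1 m] by simp
  show ?thesis
proof (rule Bochner_Integration.integrable_bound[OF int0])
  show "(\<lambda>x. weight M mu i x * x * normal_density m 1 x) \<in> borel_measurable lborel" by measurable
  show "AE x in lborel. norm (weight M mu i x * x * normal_density m 1 x) \<le> norm (normal_density m 1 x * x)"
  proof (intro AE_I2)
    fix x
    have "\<bar>weight M mu i x\<bar> \<le> 1" using weight_le1[OF assms] weight_nonneg by (simp add: abs_le_iff)
    then have "\<bar>weight M mu i x\<bar> * (\<bar>x\<bar> * normal_density m 1 x) \<le> 1 * (\<bar>x\<bar> * normal_density m 1 x)"
      by (intro mult_right_mono) auto
    then show "norm (weight M mu i x * x * normal_density m 1 x) \<le> norm (normal_density m 1 x * x)"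
      by (simp add: abs_mult mult_ac)
  qed
qed
qed

lemma nd_bound:
  assumes "x < 0" "0 < m"
  shows "- x * normal_density m 1 x \<le> exp (-(m\<^sup>2)/2) / (exp 1 * m) * normal_density 0 1 x"
proof -
  have t: "- x * m \<le> exp (- x * m - 1)" using exp_ge_add_one_self[of "- x * m - 1"] by simp
  have "- x * m * exp (x * m) \<le> exp (- x * m - 1) * exp (x * m)"
    using t by (intro mult_right_mono) auto
  also have "\<dots> = exp (- 1)" by (simp add: exp_add[symmetric])
  finally have t2: "- x * m * exp (x * m) \<le> exp (-1)" .
  have t3: "- x * exp (x * m) \<le> 1 / (exp 1 * m)"
    using t2 assms by (simp add: exp_minus field_simps)
  have e: "exp (-(x - m)\<^sup>2 / 2) = exp (-(m\<^sup>2)/2) * (exp (x * m) * exp (-(x\<^sup>2) / 2))"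
    by (simp add: exp_add[symmetric] power2_eq_square algebra_simps add_divide_distrib diff_divide_distrib)
  have "- x * exp (-(x - m)\<^sup>2 / 2) = exp (-(m\<^sup>2)/2) * exp (-(x\<^sup>2) / 2) * (- x * exp (x * m))"
    unfolding e by (simp add: mult_ac)
  also have "\<dots> \<le> exp (-(m\<^sup>2)/2) * exp (-(x\<^sup>2) / 2) * (1 / (exp 1 * m))"
    by (intro mult_left_mono t3) auto
  finally have "- x * exp (-(x - m)\<^sup>2 / 2) \<le> exp (-(m\<^sup>2)/2) / (exp 1 * m) * exp (-(x\<^sup>2) / 2)"
    by simp
  then have "- x * exp (-(x - m)\<^sup>2 / 2) / sqrt (2 * pi) \<le> exp (-(m\<^sup>2)/2) / (exp 1 * m) * exp (-(x\<^sup>2) / 2) / sqrt (2 * pi)"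
    by (intro divide_right_mono) auto
  then show ?thesis unfolding normal_density_def by simp
qed

lemma pos_numeric:
  assumes "0 < M" "3 < m" "ln (real M) + 3 < m"
  shows "(1 + real M * exp 2) * (exp (-(m\<^sup>2)/2) / (exp 1 * m)) \<le> exp (-((m-1)\<^sup>2)/2) / (2 * sqrt (2*pi))"
proof -
  have M1: "1 \<le> real M" using assms by simp
  have "real M = exp (ln (real M))" using assms by simp
  also have "\<dots> < exp (m - 3)" using assms by (simp only: exp_less_cancel_iff)
  finally have MX: "real M < exp (m - 3)" .
  have e1: "2 \<le> exp (1::real)" using exp_ge_add_one_self[of 1] by simp
  have e2: "exp (2::real) = exp 1 * exp 1" by (simp add: exp_add[symmetric])
  have e2ge: "4 \<le> exp (2::real)" unfolding e2 using e1 by (metis mult_mono' dual_order.trans mult.commute numeral_Bit0 one_add_one order_refl zero_le_numeral mult_2 add_mono) 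
  have e32: "5/2 \<le> exp (3/2::real)" using exp_ge_add_one_self[of "3/2"] by simp
  have pi9: "sqrt (2 * pi) \<le> 3"
  proof -
    have "2 * pi \<le> 9" using pi_less_4 by simp
    then have "sqrt (2*pi) \<le> sqrt 9" by (intro real_sqrt_le_mono)
    then show ?thesis by simp
  qed
  have sp: "0 < sqrt (2 * pi)" by simp
  have A: "1 + real M * exp 2 \<le> real M * (1 + exp 2)" using M1 by (simp add: algebra_simps)
  have B: "2 + 2 * exp (2::real) \<le> exp 2 * exp (3/2)"
  proof -
    have "exp 2 * (5/2) \<le> exp 2 * exp (3/2::real)" using e32 by (intro mult_left_mono) auto
    then have "5/2 * exp 2 \<le> exp 2 * exp (3/2::real)" by (simp add: mult.commute)
    then show ?thesis using e2ge by linarith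
  qed
  have "2 * sqrt (2*pi) * (1 + real M * exp 2) \<le> 2 * 3 * (real M * (1 + exp 2))"
    using A pi9 by (intro mult_mono) auto
  also have "\<dots> \<le> 2 * 3 * (exp (m - 3) * (1 + exp 2))"
    using MX by (intro mult_left_mono mult_right_mono) auto
  also have "\<dots> = 3 * exp (m - 3) * (2 + 2 * exp 2)" by (simp add: algebra_simps)
  also have "\<dots> \<le> 3 * exp (m - 3) * (exp 2 * exp (3/2))"
    using B by (intro mult_left_mono) auto
  also have "\<dots> = 3 * exp (m + 1/2)" by (simp add: exp_add[symmetric])
  also have "\<dots> \<le> m * exp (m + 1/2)" using assms by (intro mult_right_mono) auto
  also have "\<dots> = exp 1 * m * exp (m - 1/2)" by (simp add: exp_add[symmetric] mult_ac)
  finally have key: "2 * sqrt (2*pi) * (1 + real M * exp 2) \<le> exp 1 * m * exp (m - 1/2)" .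
  have ee: "exp (-((m-1)\<^sup>2)/2) = exp (-(m\<^sup>2)/2) * exp (m - 1/2)"
    by (simp add: exp_add[symmetric] power2_eq_square algebra_simps add_divide_distrib diff_divide_distrib)
  have "2 * sqrt (2*pi) * (1 + real M * exp 2) * exp (-(m\<^sup>2)/2) \<le> exp 1 * m * exp (m - 1/2) * exp (-(m\<^sup>2)/2)"
    using key by (intro mult_right_mono) auto
  then show ?thesis unfolding ee using assms sp by (simp add: field_simps)
qed

lemma pos_comp:
  assumes iM: "i < M" and mi: "0 \<le> mu i" and m3: "3 < m" and mL: "ln (real M) + 3 < m" and s0: "0 \<le> s"
  shows "(1/2) * (\<integral>x. indicator {s..s+1} x * (weight M mu i x * x * normal_density m 1 x) \<partial>lborel)
     \<le> (\<integral>x. weight M mu i x * x * normal_density m 1 x \<partial>lborel)"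
proof -
  define f where "f = (\<lambda>x. weight M mu i x * x * normal_density m 1 x)"
  define c where "c = min (mu i + 2) m"
  define C where "C = 1 + real M * exp 2"
  define K1 where "K1 = exp (-(m\<^sup>2)/2) / (exp 1 * m)"
  define W where "W = {c-1..c}"
  define Q where "Q = (\<integral>x. indicator {..<0} x * f x \<partial>lborel)"
  have M0: "0 < M" using iM by simp
  have fint: "integrable lborel f" unfolding f_def by (rule f_int[OF iM])
  have intA: "integrable lborel (\<lambda>x. indicator A x * f x)" if "A \<in> sets lborel" for A :: "real set"
    using integrable_mult_indicator[OF that fint] by simp
  have c2: "2 \<le> c" using mi m3 unfolding c_def by simp
  have fnn: "0 \<le> f x" if "0 \<le> x" for x unfolding f_def using weight_nonneg that by simp
  have num: "C * K1 \<le> exp (-((m-1)\<^sup>2)/2) / (2 * sqrt (2*pi))"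
    unfolding C_def K1_def using pos_numeric M0 m3 mL by simp
  have C0: "0 \<le> C" unfolding C_def by simp
  have K10: "0 \<le> K1" unfolding K1_def using m3 by simp
  have Qb: "-(1/2) * f y \<le> Q" if yW: "y \<in> W" for y
  proof -
    have y1: "c - 1 \<le> y" "y \<le> c" using yW W_def by auto
    have ymi: "y \<le> mu i + 2" "y \<le> m" "1 \<le> y" using y1 c_def c2 by auto
    have wy: "0 < weight M mu i y" using weight_pos[OF iM] .
    have pw: "-(C * weight M mu i y * K1) * normal_density 0 1 x \<le> indicator {..<0} x * f x" for x
    proof (cases "x < 0")
      case True
      have wr: "weight M mu i x \<le> C * weight M mu i y"
        unfolding C_def using weight_ratio[OF iM, of x y mu] True ymi by simp
      have nb: "- x * normal_density m 1 x \<le> K1 * normal_density 0 1 x"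
        unfolding K1_def using nd_bound[OF True] m3 by simp
      have "weight M mu i x * (- x * normal_density m 1 x) \<le> (C * weight M mu i y) * (K1 * normal_density 0 1 x)"
        using True C0 wy by (intro mult_mono[OF wr nb]) (auto simp: mult_nonpos_nonneg)
      then show ?thesis using True unfolding f_def by (simp add: mult_ac)
    next
      case False
      have "0 \<le> C * weight M mu i y * K1 * normal_density 0 1 x"
        using C0 K10 wy by simp
      then show ?thesis using False by simp
    qed
    have "(\<integral>x. -(C * weight M mu i y * K1) * normal_density 0 1 x \<partial>lborel) \<le> Q"
      unfolding Q_def by (intro integral_mono pw intA integrable_mult_right) auto
    then have Q1: "-(C * weight M mu i y * K1) \<le> Q" by simp
    have "(m - y)\<^sup>2 \<le> (m - 1)\<^sup>2" using ymi by (intro power_mono) auto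
    then have "(y - m)\<^sup>2 \<le> (m - 1)\<^sup>2" by (simp add: power2_commute)
    then have "exp (-((m-1)\<^sup>2)/2) \<le> exp (-(y - m)\<^sup>2/2)" by simp
    then have "exp (-((m-1)\<^sup>2)/2) / (2 * sqrt (2*pi)) \<le> exp (-(y - m)\<^sup>2/2) / (2 * sqrt (2*pi))"
      by (intro divide_right_mono) auto
    also have "\<dots> = (1/2) * 1 * normal_density m 1 y" unfolding normal_density_def by simp
    also have "\<dots> \<le> (1/2) * y * normal_density m 1 y" using ymi by (intro mult_right_mono mult_left_mono) auto
    finally have "C * K1 \<le> (1/2) * y * normal_density m 1 y" using num by linarith
    then have "C * K1 * weight M mu i y \<le> (1/2) * y * normal_density m 1 y * weight M mu i y"
      using wy by (intro mult_right_mono) auto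
    then show ?thesis using Q1 unfolding f_def by (simp add: mult_ac)
  qed
  have Wm: "W \<in> sets lborel" unfolding W_def by simp
  have intWQ: "integrable lborel (\<lambda>x. indicator W x * Q)"
    unfolding W_def by (intro integrable_mult_left integrable_real_indicator) auto
  have "(\<integral>x. -(1/2) * (indicator W x * f x) \<partial>lborel) \<le> (\<integral>x. indicator W x * Q \<partial>lborel)"
  proof (intro integral_mono integrable_mult_right intA Wm intWQ)
    fix x
    show "-(1/2) * (indicator W x * f x) \<le> indicator W x * Q"
      using Qb[of x] by (cases "x \<in> W") auto
  qed
  also have "(\<integral>x. indicator W x * Q \<partial>lborel) = Q"
    unfolding W_def by simp
  finally have QW: "-(1/2) * (\<integral>x. indicator W x * f x \<partial>lborel) \<le> Q" by simp
  define S where "S = {s..s+1}"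
  have Sm: "S \<in> sets lborel" unfolding S_def by simp
  have pw2: "indicator {..<0} x * f x + (1/2) * (indicator W x * f x) + (1/2) * (indicator S x * f x) \<le> f x" for x
  proof (cases "x < 0")
    case True
    then have "x \<notin> W" "x \<notin> S" using c2 s0 unfolding W_def S_def by auto
    then show ?thesis using True by simp
  next
    case False
    then have "0 \<le> f x" using fnn by simp
    then show ?thesis using False
      by (cases "x \<in> W"; cases "x \<in> S") auto
  qed
  have "(\<integral>x. indicator {..<0} x * f x + (1/2) * (indicator W x * f x) + (1/2) * (indicator S x * f x) \<partial>lborel)
     \<le> (\<integral>x. f x \<partial>lborel)"
    by (intro integral_mono pw2 fint Bochner_Integration.integrable_add integrable_mult_right intA Wm Sm) auto
  also have "(\<integral>x. indicator {..<0} x * f x + (1/2) * (indicator W x * f x) + (1/2) * (indicator S x * f x) \<partial>lborel)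
     = Q + (1/2) * (\<integral>x. indicator W x * f x \<partial>lborel) + (1/2) * (\<integral>x. indicator S x * f x \<partial>lborel)"
    unfolding Q_def
    by (subst Bochner_Integration.integral_add, (intro Bochner_Integration.integrable_add integrable_mult_right intA Wm Sm; simp)+,
        subst Bochner_Integration.integral_add, (intro Bochner_Integration.integrable_add integrable_mult_right intA Wm Sm; simp)+) simp
  finally show ?thesis using QW unfolding f_def S_def by linarith
qed

lemma abs_le_exp_sq: "\<bar>u::real\<bar> \<le> exp (3 * u\<^sup>2 / 8)"
proof -
  have "(\<bar>u\<bar> - 4/3)\<^sup>2 = u\<^sup>2 - 8/3 * \<bar>u\<bar> + 16/9"
    by (simp add: power2_eq_square algebra_simps)
  moreover have "0 \<le> (\<bar>u\<bar> - 4/3)\<^sup>2" by simp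
  ultimately have "\<bar>u\<bar> \<le> 1 + 3 * u\<^sup>2 / 8" by linarith
  also have "\<dots> \<le> exp (3 * u\<^sup>2 / 8)" by (rule exp_ge_add_one_self)
  finally show ?thesis .
qed

lemma neg_core:
  assumes iM: "i < M" and mi: "0 \<le> mu i" and b0: "0 < b" and jM: "j' < M" and cov: "\<bar>mu j' + b\<bar> \<le> b/6"
    and x0: "x < 0"
  shows "- x * weight M mu i x * exp (- 3 * (x + b)\<^sup>2 / 8) \<le> (b + 1) * exp (-(b\<^sup>2)/24)"
proof (cases "x \<ge> -2*b/3")
  case True
  have u: "b/3 \<le> x + b" using True by simp
  then have "(b/3)\<^sup>2 \<le> (x + b)\<^sup>2" using b0 by (intro power_mono) auto
  then have "b\<^sup>2/24 \<le> 3 * (x + b)\<^sup>2 / 8" by (simp add: power_divide)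
  then have E: "exp (- 3 * (x + b)\<^sup>2 / 8) \<le> exp (-(b\<^sup>2)/24)" by simp
  have w: "weight M mu i x \<le> 1" by (rule weight_le1[OF iM])
  have A: "- x * weight M mu i x \<le> b + 1"
    using True x0 w weight_nonneg[of M mu i x] mult_mono[of "-x" "b+1" "weight M mu i x" 1] by auto
  show ?thesis using weight_nonneg[of M mu i x] x0 b0
    by (intro mult_mono[OF A E]) auto
next
  case False
  then have x2: "x < -2*b/3" by simp
  have h1: "x\<^sup>2 \<le> (x - mu i)\<^sup>2"
  proof -
    have "(x - mu i)\<^sup>2 - x\<^sup>2 = mu i * (mu i - 2 * x)" by (simp add: power2_eq_square algebra_simps)
    moreover have "0 \<le> mu i * (mu i - 2 * x)" using mi x0 by simp
    ultimately show ?thesis by linarith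
  qed
  have h2: "(x - mu j')\<^sup>2 - x\<^sup>2 \<le> -(5 * b\<^sup>2 / 36)"
  proof -
    define p where "p = - mu j'"
    have c1: "-(b/6) \<le> mu j' + b \<and> mu j' + b \<le> b/6" using cov abs_le_iff[of "mu j' + b" "b/6"] by linarith
    have p1: "5*b/6 \<le> p" "p \<le> 7*b/6" using c1 unfolding p_def by linarith+
    have "(x - mu j')\<^sup>2 - x\<^sup>2 = p * (p + 2 * x)" unfolding p_def by (simp add: power2_eq_square algebra_simps)
    also have "\<dots> \<le> (5*b/6) * (p + 2 * x)" using p1 x2 by (intro mult_right_mono_neg) auto
    also have "\<dots> \<le> (5*b/6) * (- b/6)" using p1 x2 b0 by (intro mult_left_mono) auto
    finally show ?thesis by (simp add: power2_eq_square)
  qed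
  have "weight M mu i x \<le> exp ((x - mu j')\<^sup>2 / 2 - (x - mu i)\<^sup>2 / 2)" by (rule weight_upper[OF jM])
  also have "\<dots> \<le> exp (-(b\<^sup>2)/24)"
  proof -
    have "0 \<le> b\<^sup>2" by simp
    then have "(x - mu j')\<^sup>2 / 2 - (x - mu i)\<^sup>2 / 2 \<le> -(b\<^sup>2)/24" using h1 h2 by linarith
    then show ?thesis by simp
  qed
  finally have w: "weight M mu i x \<le> exp (-(b\<^sup>2)/24)" .
  have xe: "- x * exp (- 3 * (x + b)\<^sup>2 / 8) \<le> b + 1"
  proof (cases "x + b \<ge> 0")
    case True
    have "exp (- 3 * (x + b)\<^sup>2 / 8) \<le> 1" by simp
    then have "- x * exp (- 3 * (x + b)\<^sup>2 / 8) \<le> - x * 1" using x0 by (intro mult_left_mono) auto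
    then show ?thesis using True by simp
  next
    case False
    define u where "u = x + b"
    have "- x = b + \<bar>u\<bar>" using False unfolding u_def by simp
    then have "- x * exp (- 3 * u\<^sup>2 / 8) = b * exp (- 3 * u\<^sup>2 / 8) + \<bar>u\<bar> * exp (- 3 * u\<^sup>2 / 8)"
      by (simp add: algebra_simps)
    also have "\<dots> \<le> b * 1 + 1"
    proof (intro add_mono)
      show "b * exp (- 3 * u\<^sup>2 / 8) \<le> b * 1" using b0 by (intro mult_left_mono) auto
      have "\<bar>u\<bar> * exp (- 3 * u\<^sup>2 / 8) \<le> exp (3 * u\<^sup>2 / 8) * exp (- 3 * u\<^sup>2 / 8)"
        by (intro mult_right_mono abs_le_exp_sq) auto
      also have "\<dots> = 1" by (simp add: exp_add[symmetric])
      finally show "\<bar>u\<bar> * exp (- 3 * u\<^sup>2 / 8) \<le> 1" .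
    qed
    finally show ?thesis unfolding u_def by simp
  qed
  have "(- x * exp (- 3 * (x + b)\<^sup>2 / 8)) * weight M mu i x \<le> (b + 1) * exp (-(b\<^sup>2)/24)"
    using xe w x0 b0 weight_nonneg[of M mu i x] by (intro mult_mono) auto
  then show ?thesis by (simp add: mult_ac)
qed

lemma neg_comp:
  assumes iM: "i < M" and mi: "0 \<le> mu i" and b0: "0 < b" and jM: "j' < M" and cov: "\<bar>mu j' + b\<bar> \<le> b/6"
  shows "-(2*(b+1)*exp(-(b\<^sup>2)/24)) \<le> (\<integral>x. weight M mu i x * x * normal_density (-b) 1 x \<partial>lborel)"
proof -
  define K where "K = 2*(b+1)*exp(-(b\<^sup>2)/24)"
  have sq: "sqrt (2*pi*2\<^sup>2) = 2 * sqrt (2*pi)"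
  proof -
    have e: "2*pi*2\<^sup>2 = 2\<^sup>2 * (2*pi)" by simp
    have "sqrt (2*pi*2\<^sup>2) = sqrt (2\<^sup>2) * sqrt (2*pi)" unfolding e by (rule real_sqrt_mult)
    then show ?thesis by simp
  qed
  have pw: "-K * normal_density (-b) 2 x \<le> weight M mu i x * x * normal_density (-b) 1 x" for x
  proof (cases "x < 0")
    case True
    have core: "- x * weight M mu i x * exp (- 3 * (x + b)\<^sup>2 / 8) \<le> (b + 1) * exp (-(b\<^sup>2)/24)"
      by (rule neg_core[OF iM mi b0 jM cov True])
    have nd1: "normal_density (-b) 1 x = exp (-(x+b)\<^sup>2/2) / sqrt (2*pi)"
      unfolding normal_density_def by simp
    have nd2: "normal_density (-b) 2 x = exp (-(x+b)\<^sup>2/8) / (2 * sqrt (2*pi))"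
      unfolding normal_density_def sq by simp
    have es: "exp (-(x+b)\<^sup>2/2) = exp (- 3 * (x + b)\<^sup>2 / 8) * exp (-(x+b)\<^sup>2/8)"
      by (simp add: exp_add[symmetric])
    have "- x * weight M mu i x * exp (-(x+b)\<^sup>2/2) = (- x * weight M mu i x * exp (- 3 * (x + b)\<^sup>2 / 8)) * exp (-(x+b)\<^sup>2/8)"
      unfolding es by (simp add: mult_ac)
    also have "\<dots> \<le> ((b + 1) * exp (-(b\<^sup>2)/24)) * exp (-(x+b)\<^sup>2/8)"
      by (intro mult_right_mono core) auto
    finally have "- x * weight M mu i x * exp (-(x+b)\<^sup>2/2) / sqrt (2*pi) \<le> ((b + 1) * exp (-(b\<^sup>2)/24)) * exp (-(x+b)\<^sup>2/8) / sqrt (2*pi)"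
      by (intro divide_right_mono) auto
    moreover have eq1: "K * normal_density (-b) 2 x = ((b + 1) * exp (-(b\<^sup>2)/24)) * exp (-(x+b)\<^sup>2/8) / sqrt (2*pi)"
      unfolding nd2 K_def by (simp add: field_simps)
    moreover have eq2: "weight M mu i x * x * normal_density (-b) 1 x = -(- x * weight M mu i x * exp (-(x+b)\<^sup>2/2) / sqrt (2*pi))"
      unfolding nd1 by simp
    ultimately show ?thesis by linarith
  next
    case False
    have "0 \<le> K" unfolding K_def using b0 by simp
    then have "-K * normal_density (-b) 2 x \<le> 0" by (simp add: mult_nonpos_nonneg)
    moreover have "0 \<le> weight M mu i x * x * normal_density (-b) 1 x" using False weight_nonneg by simp
    ultimately show ?thesis by linarith
  qed
  have "(\<integral>x. -K * normal_density (-b) 2 x \<partial>lborel) \<le> (\<integral>x. weight M mu i x * x * normal_density (-b) 1 x \<partial>lborel)"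
    by (intro integral_mono pw f_int[OF iM] integrable_mult_right) auto
  then show ?thesis unfolding K_def by simp
qed

lemma neg_numeric:
  assumes M0: "0 < M" and a3: "3 < a" and aL: "ln (real M) + 3 < a" and ba: "10*a < b"
  shows "2*(b+1)*exp(-(b\<^sup>2)/24) \<le> exp (-1 - 9*a\<^sup>2/4) / (real M * sqrt (2*pi)) / (2 * real M)"
proof -
  have "real M = exp (ln (real M))" using M0 by simp
  also have "\<dots> < exp (a - 3)" using aL by (simp only: exp_less_cancel_iff)
  finally have MX: "real M < exp (a - 3)" .
  have MX2: "real M ^ 2 \<le> exp (2*a - 6)"
  proof -
    have "real M ^ 2 \<le> exp (a - 3) ^ 2" using MX by (intro power_mono) auto
    also have "\<dots> = exp (2*a - 6)" by (simp add: exp_add[symmetric] power2_eq_square)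
    finally show ?thesis .
  qed
  have pi9: "sqrt (2 * pi) \<le> 3"
  proof -
    have "2 * pi \<le> 9" using pi_less_4 by simp
    then have "sqrt (2*pi) \<le> sqrt 9" by (intro real_sqrt_le_mono)
    then show ?thesis by simp
  qed
  have e1: "2 \<le> exp (1::real)" using exp_ge_add_one_self[of 1] by simp
  have e5: "32 \<le> exp (5::real)"
  proof -
    have "exp (5::real) = exp 1 ^ 5" using exp_of_nat_mult[of 5 "1::real"] by simp
    moreover have "(2::real) ^ 5 \<le> exp 1 ^ 5" using e1 by (intro power_mono) auto
    ultimately show ?thesis by simp
  qed
  have b30: "30 \<le> b" using a3 ba by simp
  have b2: "100 * a\<^sup>2 \<le> b\<^sup>2"
  proof -
    have "(10 * a)\<^sup>2 \<le> b\<^sup>2" using a3 ba by (intro power_mono) auto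
    then show ?thesis by (simp add: power_mult_distrib)
  qed
  have b3: "30 * b \<le> b\<^sup>2" using b30 mult_right_mono[OF b30, of b] by (simp add: power2_eq_square)
  have ex: "3*b/8 + 5 \<le> b\<^sup>2/24 - 9*a\<^sup>2/4 - 2*a + 5" using b2 b3 ba by linarith
  have "12 * (b + 1) \<le> 32 * (1 + 3*b/8)" by simp
  also have "\<dots> \<le> exp 5 * exp (3*b/8)"
    using e5 exp_ge_add_one_self[of "3*b/8"] b30 by (intro mult_mono) auto
  also have "\<dots> = exp (3*b/8 + 5)" by (simp add: exp_add[symmetric])
  also have "\<dots> \<le> exp (b\<^sup>2/24 - 9*a\<^sup>2/4 - 2*a + 5)" using ex by simp
  finally have E: "12 * (b + 1) \<le> exp (b\<^sup>2/24 - 9*a\<^sup>2/4 - 2*a + 5)" .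
  have "4 * real M ^ 2 * sqrt (2*pi) \<le> 4 * exp (2*a - 6) * 3"
    using MX2 pi9 by (intro mult_mono) auto
  then have "4 * real M ^ 2 * sqrt (2*pi) * ((b+1) * exp(-(b\<^sup>2)/24)) \<le> 4 * exp (2*a - 6) * 3 * ((b+1) * exp(-(b\<^sup>2)/24))"
    using b30 by (intro mult_right_mono) auto
  also have "\<dots> = (12 * (b + 1)) * (exp (2*a - 6) * exp(-(b\<^sup>2)/24))" by (simp add: mult_ac)
  also have "\<dots> \<le> exp (b\<^sup>2/24 - 9*a\<^sup>2/4 - 2*a + 5) * (exp (2*a - 6) * exp(-(b\<^sup>2)/24))"
    using E by (intro mult_right_mono) auto
  also have "\<dots> = exp (-1 - 9*a\<^sup>2/4)" by (simp add: exp_add[symmetric])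
  finally have X: "4 * real M ^ 2 * sqrt (2*pi) * ((b+1) * exp(-(b\<^sup>2)/24)) \<le> exp (-1 - 9*a\<^sup>2/4)" .
  have pos: "0 < 4 * real M ^ 2 * sqrt (2*pi)" using M0 by simp
  have "2*(b+1)*exp(-(b\<^sup>2)/24) = (4 * real M ^ 2 * sqrt (2*pi) * ((b+1) * exp(-(b\<^sup>2)/24))) / (4 * real M ^ 2 * sqrt (2*pi)) * 2"
    using pos M0 by simp
  also have "\<dots> \<le> exp (-1 - 9*a\<^sup>2/4) / (4 * real M ^ 2 * sqrt (2*pi)) * 2"
    using X pos by (intro mult_right_mono divide_right_mono) auto
  also have "\<dots> = exp (-1 - 9*a\<^sup>2/4) / (real M * sqrt (2*pi)) / (2 * real M)"
    using M0 by (simp add: field_simps power2_eq_square)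
  finally show ?thesis .
qed

lemma j0_window:
  assumes iM: "i < M" and mi: "0 \<le> mu i" and mia: "mu i \<le> 4*a" and a3: "3 < a" and ma: "a < m" and m3a: "m < 3*a"
  shows "exp (-1 - 9*a\<^sup>2/4) / (real M * sqrt (2*pi)) \<le>
    (\<integral>x. indicator {(mu i + m)/2..(mu i + m)/2+1} x * (weight M mu i x * x * normal_density m 1 x) \<partial>lborel)"
proof -
  define h where "h = (mu i + m)/2"
  define S where "S = {h..h+1}"
  define P where "P = exp (-1 - 9*a\<^sup>2/4) / (real M * sqrt (2*pi))"
  have M0: "0 < real M" using iM by simp
  have pw: "indicator S x * P \<le> indicator S x * (weight M mu i x * x * normal_density m 1 x)" for x
  proof (cases "x \<in> S")
    case True
    then have x1: "h \<le> x" "x \<le> h + 1" unfolding S_def by auto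
    have x1': "1 \<le> x" using x1 mi ma a3 unfolding h_def by simp
    have "(x - h)\<^sup>2 \<le> 1\<^sup>2" using x1 by (intro power_mono) auto
    then have sq1: "(x - h)\<^sup>2 \<le> 1" by simp
    have ab: "\<bar>m - mu i\<bar> \<le> 3*a" using mi mia ma m3a a3 by (simp add: abs_le_iff)
    have "\<bar>m - mu i\<bar>\<^sup>2 \<le> (3*a)\<^sup>2" using ab by (intro power_mono) auto
    then have sq2: "(m - mu i)\<^sup>2 \<le> (3*a)\<^sup>2" by simp
    have id: "(x - mu i)\<^sup>2 + (x - m)\<^sup>2 = 2 * (x - h)\<^sup>2 + (m - mu i)\<^sup>2 / 2"
      unfolding h_def power2_eq_square by (simp add: field_simps)
    have "(x - mu i)\<^sup>2 + (x - m)\<^sup>2 \<le> 2 + 9*a\<^sup>2/2" using id sq1 sq2 by (simp add: power_mult_distrib)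
    then have ee: "exp (-1 - 9*a\<^sup>2/4) \<le> exp (-(x - mu i)\<^sup>2 / 2) * exp (-(x - m)\<^sup>2/2)"
      by (simp add: exp_add[symmetric])
    have "P = exp (-1 - 9*a\<^sup>2/4) / (real M * sqrt (2*pi))" by (simp add: P_def)
    also have "\<dots> \<le> exp (-(x - mu i)\<^sup>2 / 2) * exp (-(x - m)\<^sup>2/2) / (real M * sqrt (2*pi))"
      using ee M0 by (intro divide_right_mono) auto
    also have "\<dots> = (exp (-(x - mu i)\<^sup>2 / 2) / real M) * 1 * normal_density m 1 x"
      unfolding normal_density_def by simp
    also have "\<dots> \<le> weight M mu i x * x * normal_density m 1 x"
      using weight_lower[OF iM, of x mu] x1' weight_nonneg[of M mu i x] by (intro mult_mono) auto
    finally show ?thesis using True by simp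
  qed auto
  have "(\<integral>x. indicator S x * P \<partial>lborel) \<le> (\<integral>x. indicator S x * (weight M mu i x * x * normal_density m 1 x) \<partial>lborel)"
  proof (intro integral_mono pw)
    show "integrable lborel (\<lambda>x. indicator S x * P)"
      unfolding S_def by (intro integrable_mult_left integrable_real_indicator) auto
    show "integrable lborel (\<lambda>x. indicator S x * (weight M mu i x * x * normal_density m 1 x))"
      using integrable_mult_indicator[OF _ f_int[OF iM], of S] unfolding S_def by simp
  qed
  moreover have "(\<integral>x. indicator S x * P \<partial>lborel) = P" unfolding S_def by simp
  ultimately show ?thesis unfolding S_def P_def h_def by simp
qed

theorem lemma4:
  fixes M :: nat and a :: real and mustar mu :: "nat \<Rightarrow> real" and i :: nat
  assumes ha: "a > ln (real M) + 3"
    and hsep: "\<forall>j<M. mustar j < -10 * a \<or> mustar j > a"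
    and hex: "\<exists>j<M. a < mustar j \<and> mustar j < 3 * a"
    and hcov: "\<forall>j<M. mustar j < -10 * a \<longrightarrow> (\<exists>j'<M. \<bar>mu j' - mustar j\<bar> \<le> \<bar>mustar j\<bar> / 6)"
    and hi: "i < M"
    and hmu: "0 \<le> mu i" "mu i \<le> 4 * a"
  shows "(\<integral>x. weight M mu i x * x * mixture_density M mustar x \<partial>lborel) \<ge> 0"
proof -
  have M0: "0 < M" using hi by simp
  have lnM: "0 \<le> ln (real M)" using M0 by simp
  have a3: "3 < a" using ha lnM by linarith
  obtain j0 where j0: "j0 < M" "a < mustar j0" "mustar j0 < 3*a" using hex by blast
  define I where "I = (\<lambda>j. \<integral>x. weight M mu i x * x * normal_density (mustar j) 1 x \<partial>lborel)"
  define P where "P = exp (-1 - 9*a\<^sup>2/4) / (real M * sqrt (2*pi))"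
  have P0: "0 < P" unfolding P_def using M0 by simp
  have main_eq: "(\<integral>x. weight M mu i x * x * mixture_density M mustar x \<partial>lborel) = (1 / real M) * (\<Sum>j<M. I j)"
  proof -
    have "(\<integral>x. weight M mu i x * x * mixture_density M mustar x \<partial>lborel)
        = (\<integral>x. (1 / real M) * (\<Sum>j<M. weight M mu i x * x * normal_density (mustar j) 1 x) \<partial>lborel)"
      unfolding mixture_density_def by (simp add: sum_distrib_left mult_ac)
    also have "\<dots> = (1 / real M) * (\<integral>x. (\<Sum>j<M. weight M mu i x * x * normal_density (mustar j) 1 x) \<partial>lborel)"
      by simp
    also have "(\<integral>x. (\<Sum>j<M. weight M mu i x * x * normal_density (mustar j) 1 x) \<partial>lborel) = (\<Sum>j<M. I j)"
      unfolding I_def by (intro Bochner_Integration.integral_sum f_int[OF hi])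
    finally show ?thesis .
  qed
  define L where "L = (\<lambda>j. -P/(2*real M) + (if j = j0 then P/2 + P/(2*real M) else 0))"
  have bound: "L j \<le> I j" if jM: "j < M" for j
  proof (cases "j = j0")
    case True
    have m3: "3 < mustar j0" "ln (real M) + 3 < mustar j0" using j0 a3 ha by linarith+
    have s0: "0 \<le> (mu i + mustar j0)/2" using hmu j0 a3 by simp
    have "P \<le> (\<integral>x. indicator {(mu i + mustar j0)/2..(mu i + mustar j0)/2+1} x * (weight M mu i x * x * normal_density (mustar j0) 1 x) \<partial>lborel)"
      unfolding P_def using j0_window[of i M mu a "mustar j0", OF hi hmu a3 j0(2) j0(3)] .
    moreover have "(1/2) * (\<integral>x. indicator {(mu i + mustar j0)/2..(mu i + mustar j0)/2+1} x * (weight M mu i x * x * normal_density (mustar j0) 1 x) \<partial>lborel) \<le> I j0"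
      unfolding I_def by (rule pos_comp[of i M mu "mustar j0" "(mu i + mustar j0)/2", OF hi hmu(1) m3 s0])
    ultimately have "P/2 \<le> I j0" by linarith
    then show ?thesis using True unfolding L_def by simp
  next
    case False
    have LL: "L j = -P/(2*real M)" unfolding L_def using False by simp
    from hsep jM have "mustar j < -10 * a \<or> mustar j > a" by blast
    then show ?thesis
    proof
      assume pos: "mustar j > a"
      have m3: "3 < mustar j" "ln (real M) + 3 < mustar j" using pos a3 ha by linarith+
      have "(1/2) * (\<integral>x. indicator {0..0+1} x * (weight M mu i x * x * normal_density (mustar j) 1 x) \<partial>lborel) \<le> I j"
        unfolding I_def by (rule pos_comp[of i M mu "mustar j" 0, OF hi hmu(1) m3]) simp
      moreover have "0 \<le> (\<integral>x. indicator {0..0+1} x * (weight M mu i x * x * normal_density (mustar j) 1 x) \<partial>lborel)"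
        by (intro Bochner_Integration.integral_nonneg) (auto simp: indicator_def weight_nonneg)
      ultimately have "0 \<le> I j" by linarith
      moreover have "-P/(2*real M) \<le> 0" using P0 M0 by simp
      ultimately show ?thesis unfolding LL by linarith
    next
      assume neg: "mustar j < -10 * a"
      define b where "b = - mustar j"
      have b0: "0 < b" "10 * a < b" using neg a3 unfolding b_def by linarith+
      obtain j' where j': "j' < M" "\<bar>mu j' - mustar j\<bar> \<le> \<bar>mustar j\<bar> / 6" using hcov jM neg by blast
      have cov: "\<bar>mu j' + b\<bar> \<le> b/6" using j' b0 unfolding b_def by simp
      have "-(2*(b+1)*exp(-(b\<^sup>2)/24)) \<le> (\<integral>x. weight M mu i x * x * normal_density (-b) 1 x \<partial>lborel)"
        by (rule neg_comp[of i M mu b j', OF hi hmu(1) b0(1) j'(1) cov])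
      then have "-(2*(b+1)*exp(-(b\<^sup>2)/24)) \<le> I j" unfolding I_def b_def by simp
      moreover have "2*(b+1)*exp(-(b\<^sup>2)/24) \<le> P / (2 * real M)"
        unfolding P_def using neg_numeric[OF M0 a3 ha b0(2)] by simp
      ultimately show ?thesis unfolding LL by linarith
    qed
  qed
  have "(\<Sum>j<M. L j) \<le> (\<Sum>j<M. I j)" by (intro sum_mono bound) auto
  moreover have "(\<Sum>j<M. L j) = P / (2 * real M)"
  proof -
    have "(\<Sum>j<M. L j) = (\<Sum>j<M. -P/(2*real M)) + (\<Sum>j<M. (if j = j0 then P/2 + P/(2*real M) else 0))"
      unfolding L_def by (rule sum.distrib)
    also have "\<dots> = real M * (-P/(2*real M)) + (P/2 + P/(2*real M))"
      using j0 by simp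
    also have "\<dots> = P / (2 * real M)" using M0 by (simp add: field_simps)
    finally show ?thesis .
  qed
  ultimately have "0 \<le> (\<Sum>j<M. I j)" using P0 M0 by (smt (verit) divide_pos_pos of_nat_0_less_iff)
  then show ?thesis unfolding main_eq using M0 by simp
qed

end
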